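(* Let $k\ge3$ and let $\{H_{r_1},\dots,H_{r_k}\}$ be a set of pairwise parallel hyperplanes in $\mathbb{H}^n$ (pairwise distinct and disjoint in $\mathbb{H}^n$). Suppose all $H_{r_i}$ have a common ideal point $\xi\in\partial\mathbb{H}^n$, and that the group $D\subseteq\mathrm{Iso}(\mathbb{H}^n)$ generated by the reflections $r_i$ across $H_{r_i}$ is a discrete subgroup. Then $D$ is isomorphic to the infinite dihedral group $D_\infty$.
   Context: $\partial\mathbb{H}^n$ is the visual boundary of hyperbolic $n$-space; an ideal point of a hyperplane is an endpoint of a geodesic ray contained in it. *)

theory Defs
  imports "HOL-Analysis.Analysis" "HOL-Algebra.Bij" "HOL-Algebra.Generated_Groups"
begin

text \<open>Hyperboloid model of hyperbolic n-space, n = DIM('a), inside R^n x R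
  with the Lorentzian form of signature (n,1).\<close>

definition lor :: "('a::euclidean_space \<times> real) \<Rightarrow> ('a \<times> real) \<Rightarrow> real" where
  "lor p q = fst p \<bullet> fst q - snd p * snd q"

definition hyp :: "('a::euclidean_space \<times> real) set" where
  "hyp = {p. lor p p = -1 \<and> snd p > 0}"

definition hdist :: "('a::euclidean_space \<times> real) \<Rightarrow> ('a \<times> real) \<Rightarrow> real" where
  "hdist p q = arcosh (- lor p q)"

definition hplane :: "('a::euclidean_space \<times> real) \<Rightarrow> ('a \<times> real) set" where
  "hplane v = {p \<in> hyp. lor p v = 0}"

definition hrefl :: "('a::euclidean_space \<times> real) \<Rightarrow> ('a \<times> real) \<Rightarrow> ('a \<times> real)" where
  "hrefl v = (\<lambda>p \<in> hyp. p - (2 * lor p v / lor v v) *\<^sub>R v)"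

definition geodesic_ray :: "(real \<Rightarrow> ('a::euclidean_space \<times> real)) \<Rightarrow> bool" where
  "geodesic_ray \<gamma> \<longleftrightarrow> (\<forall>t\<ge>0. \<gamma> t \<in> hyp) \<and>
     (\<forall>s\<ge>0. \<forall>t\<ge>0. hdist (\<gamma> s) (\<gamma> t) = \<bar>s - t\<bar>)"

text \<open>Two rays define the same point of the visual boundary iff they stay at bounded distance.\<close>
definition asymptotic :: "(real \<Rightarrow> ('a::euclidean_space \<times> real)) \<Rightarrow> (real \<Rightarrow> ('a \<times> real)) \<Rightarrow> bool" where
  "asymptotic \<gamma> \<delta> \<longleftrightarrow> (\<exists>C. \<forall>t\<ge>0. hdist (\<gamma> t) (\<delta> t) \<le> C)"

definition has_ideal_point :: "('a::euclidean_space \<times> real) set \<Rightarrow> (real \<Rightarrow> ('a \<times> real)) \<Rightarrow> bool" where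
  "has_ideal_point S \<gamma> \<longleftrightarrow>
     (\<exists>\<delta>. geodesic_ray \<delta> \<and> (\<forall>t\<ge>0. \<delta> t \<in> S) \<and> asymptotic \<delta> \<gamma>)"

text \<open>Discreteness of a set of isometries (maps extensional on H^n) in the compact-open
  topology of Iso(H^n).\<close>
definition discrete_isos :: "(('a::euclidean_space \<times> real) \<Rightarrow> ('a \<times> real)) set \<Rightarrow> bool" where
  "discrete_isos D \<longleftrightarrow> (\<forall>g\<in>D. \<exists>K e. compact K \<and> K \<subseteq> hyp \<and> e > 0 \<and>
      (\<forall>h\<in>D. h \<noteq> g \<longrightarrow> (\<exists>x\<in>K. hdist (h x) (g x) \<ge> e)))"

text \<open>The infinite dihedral group Z \<rtimes> Z/2: pairs (e,m), e = \<plusminus>1, acting on Z by x \<mapsto> e*x + m.\<close>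
definition DInf :: "(int \<times> int) monoid" where
  "DInf = \<lparr>carrier = {(e, m). e = 1 \<or> e = -1},
           mult = (\<lambda>(e1, m1) (e2, m2). (e1 * e2, m1 + e1 * m2)),
           one = (1, 0)\<rparr>"

definition refl_group :: "nat \<Rightarrow> (nat \<Rightarrow> ('a::euclidean_space \<times> real)) \<Rightarrow> (('a \<times> real) \<Rightarrow> ('a \<times> real)) set" where
  "refl_group k v = generate (BijGroup hyp) {hrefl (v i) | i. i < k}"

end

theory Submission
  imports Defs
begin



lemma lor_sym: "lor p q = lor q p"
  by (simp add: lor_def inner_commute mult.commute)
lemma lor_add_left[simp]: "lor (p + q) r = lor p r + lor q r"
  by (simp add: lor_def inner_add_left algebra_simps)
lemma lor_add_right[simp]: "lor r (p + q) = lor r p + lor r q"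
  by (simp add: lor_def inner_add_right algebra_simps)
lemma lor_diff_left[simp]: "lor (p - q) r = lor p r - lor q r"
  by (simp add: lor_def inner_diff_left algebra_simps)
lemma lor_diff_right[simp]: "lor r (p - q) = lor r p - lor r q"
  by (simp add: lor_def inner_diff_right algebra_simps)
lemma lor_scale_left[simp]: "lor (c *\<^sub>R p) r = c * lor p r"
  by (simp add: lor_def algebra_simps)
lemma lor_scale_right[simp]: "lor r (c *\<^sub>R p) = c * lor r p"
  by (simp add: lor_def algebra_simps)
lemma lor_minus_left[simp]: "lor (- p) r = - lor p r"
  by (simp add: lor_def algebra_simps)
lemma lor_minus_right[simp]: "lor r (- p) = - lor r p"
  by (simp add: lor_def algebra_simps)
lemma lor_zero[simp]: "lor 0 r = 0" "lor r 0 = 0"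
  by (simp_all add: lor_def)

lemma hrefl_scale: "c \<noteq> 0 \<Longrightarrow> hrefl (c *\<^sub>R v) = hrefl v"
  unfolding hrefl_def by (rule restrict_ext) (simp add: power2_eq_square)

lemma hplane_scale: "c \<noteq> 0 \<Longrightarrow> hplane (c *\<^sub>R v) = hplane v"
  unfolding hplane_def by auto

lemma hyp_basic:
  assumes "p \<in> hyp"
  shows "fst p \<bullet> fst p = (snd p)^2 - 1" "snd p \<ge> 1"
proof -
  show e: "fst p \<bullet> fst p = (snd p)^2 - 1"
    using assms by (auto simp: hyp_def lor_def power2_eq_square)
  have "1^2 \<le> (snd p)^2" using e inner_ge_zero[of "fst p"] by simp
  then show "snd p \<ge> 1" using assms power2_le_imp_le[of 1 "snd p"] by (auto simp: hyp_def)
qed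

lemma hyp_lor_neg:
  assumes "p \<in> hyp" "q \<in> hyp" shows "lor p q \<le> -1"
proof -
  let ?x = "fst p" and ?y = "fst q" and ?s = "snd p" and ?t = "snd q"
  note h1 = hyp_basic[OF assms(1)] hyp_basic[OF assms(2)]
  have cs: "(?x \<bullet> ?y)^2 \<le> (?s^2 - 1) * (?t^2 - 1)"
    using Cauchy_Schwarz_ineq[of ?x ?y] h1 by simp
  have "(?s * ?t - 1)^2 - (?s^2 - 1) * (?t^2 - 1) = (?s - ?t)^2"
    by (simp add: power2_eq_square algebra_simps)
  hence "(?s^2 - 1) * (?t^2 - 1) \<le> (?s * ?t - 1)^2"
    using zero_le_power2[of "?s - ?t"] by linarith
  hence "(?x \<bullet> ?y)^2 \<le> (?s * ?t - 1)^2" using cs by linarith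
  moreover have "?s * ?t - 1 \<ge> 0" using h1 mult_mono[of 1 ?s 1 ?t] by simp
  ultimately have "?x \<bullet> ?y \<le> ?s * ?t - 1"
    using power2_le_imp_le by (metis abs_ge_self abs_of_nonneg order_trans power2_abs)
  thus ?thesis by (simp add: lor_def)
qed

lemma sheet:
  assumes "p \<in> hyp" "lor q q = -1" "lor p q < 0" shows "q \<in> hyp"
proof -
  let ?x = "fst p" and ?y = "fst q" and ?s = "snd p" and ?t = "snd q"
  note h1 = hyp_basic[OF assms(1)]
  have ey: "?y \<bullet> ?y = ?t^2 - 1" using assms(2) by (simp add: lor_def power2_eq_square)
  have t0: "?t \<noteq> 0" using ey inner_ge_zero[of ?y] by auto
  have "?t > 0"
  proof (rule ccontr)
    assume "\<not> ?t > 0" hence tn: "?t < 0" using t0 by simp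
    have cs: "(?x \<bullet> ?y)^2 \<le> (?s^2 - 1) * (?t^2 - 1)"
      using Cauchy_Schwarz_ineq[of ?x ?y] h1 ey by simp
    have "(?s * ?t)^2 - (?s^2 - 1) * (?t^2 - 1) = ?s^2 + ?t^2 - 1"
      by (simp add: power2_eq_square algebra_simps)
    moreover have "?s^2 \<ge> 1" using h1 by (simp add: one_le_power)
    moreover have "?t^2 > 0" using t0 by simp
    ultimately have "(?x \<bullet> ?y)^2 < (?s * ?t)^2" using cs by linarith
    hence "\<bar>?x \<bullet> ?y\<bar>^2 < \<bar>?s * ?t\<bar>^2" by simp
    hence "\<bar>?x \<bullet> ?y\<bar> < \<bar>?s * ?t\<bar>"
      using power_less_imp_less_base[of "\<bar>?x \<bullet> ?y\<bar>" 2 "\<bar>?s * ?t\<bar>"] by simp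
    moreover have "\<bar>?s * ?t\<bar> = - (?s * ?t)" using h1 tn
      by (simp add: abs_mult mult_pos_neg)
    ultimately have "?x \<bullet> ?y - ?s * ?t > 0" by linarith
    thus False using assms(3) by (simp add: lor_def)
  qed
  thus ?thesis using assms(2) by (simp add: hyp_def)
qed

lemma hrefl_apply: "p \<in> hyp \<Longrightarrow> hrefl v p = p - (2 * lor p v / lor v v) *\<^sub>R v"
  by (simp add: hrefl_def)

lemma hrefl_in_hyp:
  assumes "lor v v > 0" "p \<in> hyp" shows "hrefl v p \<in> hyp"
proof -
  define P where "P = lor p v"
  define L where "L = lor v v"
  define a where "a = 2 * P / L"
  have pp: "lor p p = -1" using assms(2) by (simp add: hyp_def)
  have L0: "L > 0" using assms(1) L_def by simp
  have aL: "a * L = 2 * P" using L0 a_def by simp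
  let ?q = "p - a *\<^sub>R v"
  have "lor ?q ?q = lor p p - 2 * a * P + a * a * L"
    by (simp add: P_def L_def lor_sym[of v p] algebra_simps)
  also have "\<dots> = -1" using pp aL by (simp add: algebra_simps)
  finally have qq: "lor ?q ?q = -1" .
  have "lor p ?q = -1 - a * P" using pp by (simp add: P_def)
  moreover have "a * P \<ge> 0" using L0 by (simp add: a_def)
  ultimately have "lor p ?q < 0" by linarith
  thus ?thesis using sheet[OF assms(2) qq] assms(2) by (simp add: hrefl_apply a_def P_def L_def)
qed

lemma hrefl_invol:
  assumes "lor v v > 0" "p \<in> hyp" shows "hrefl v (hrefl v p) = p"
proof -
  have "lor (p - (2 * lor p v / lor v v) *\<^sub>R v) v = - lor p v" using assms(1) by simp
  thus ?thesis using assms hrefl_in_hyp[OF assms] by (simp add: hrefl_apply)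
qed

lemma hrefl_Bij: assumes "lor v v > 0" shows "hrefl v \<in> Bij hyp"
proof -
  have "bij_betw (hrefl v) hyp hyp"
    by (rule bij_betwI[where g="hrefl v"]) (auto simp: hrefl_in_hyp[OF assms] hrefl_invol[OF assms])
  moreover have "hrefl v \<in> extensional hyp" by (simp add: hrefl_def)
  ultimately show ?thesis by (simp add: Bij_def)
qed

lemma neg_or_hyp:
  assumes "lor r r = -1" shows "r \<in> hyp \<or> - r \<in> hyp"
proof -
  have e: "fst r \<bullet> fst r = (snd r)^2 - 1" using assms by (simp add: lor_def power2_eq_square)
  have "snd r \<noteq> 0" using e inner_ge_zero[of "fst r"] by auto
  hence "snd r > 0 \<or> snd (- r) > 0" by auto
  moreover have "lor (-r) (-r) = -1" using assms by simp
  ultimately show ?thesis using assms by (auto simp: hyp_def)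
qed

lemma hplanes_meet:
  assumes xx: "lor x x = 1" and yy: "lor y y = 1" and a1: "\<bar>lor x y\<bar> < 1"
  shows "\<exists>p\<in>hyp. lor p x = 0 \<and> lor p y = 0"
proof -
  define a where "a = lor x y"
  define q :: "'a \<times> real" where "q = (0, 1)"
  have qq: "lor q q = -1" by (simp add: q_def lor_def)
  define z where "z = y - a *\<^sub>R x"
  have zx: "lor z x = 0" "lor x z = 0" using xx by (simp_all add: z_def a_def lor_sym[of y x])
  have zz: "lor z z = 1 - a^2" using xx yy by (simp add: z_def a_def lor_sym[of y x] algebra_simps power2_eq_square)
  have L0: "lor z z > 0" using zz a1 a_def by (simp add: abs_square_less_1)
  define \<alpha> where "\<alpha> = lor q x"
  define \<beta> where "\<beta> = lor q z / lor z z"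
  define p where "p = q - \<alpha> *\<^sub>R x - \<beta> *\<^sub>R z"
  have px: "lor p x = 0" using xx zx by (simp add: p_def \<alpha>_def)
  have pz: "lor p z = 0" using zx L0 by (simp add: p_def \<beta>_def)
  have yz: "y = z + a *\<^sub>R x" by (simp add: z_def)
  have py: "lor p y = 0" using px pz by (simp add: yz)
  have "lor p p = lor p q - \<alpha> * lor p x - \<beta> * lor p z" by (simp add: p_def[of] lor_sym[of _ p])
  hence "lor p p = lor p q" using px pz by simp
  also have "\<dots> = lor q q - \<alpha> * lor x q - \<beta> * lor z q" by (simp add: p_def)
  also have "\<dots> = -1 - \<alpha>^2 - (lor q z)^2 / lor z z"
    using qq by (simp add: \<alpha>_def \<beta>_def lor_sym[of x q] lor_sym[of z q] power2_eq_square)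
  finally have pp: "lor p p = -1 - \<alpha>^2 - (lor q z)^2 / lor z z" .
  have "(lor q z)^2 / lor z z \<ge> 0" using L0 by simp
  hence N0: "- lor p p > 0" using pp zero_le_power2[of \<alpha>] by linarith
  define r where "r = (1 / sqrt (- lor p p)) *\<^sub>R p"
  have "lor r r = (1 / sqrt (- lor p p))^2 * lor p p" by (simp add: r_def power2_eq_square)
  also have "\<dots> = -1" using N0 by (simp add: power_divide)
  finally have rr: "lor r r = -1" .
  have rx: "lor r x = 0" "lor r y = 0" using px py by (simp_all add: r_def)
  from neg_or_hyp[OF rr] show ?thesis
  proof
    assume "r \<in> hyp" thus ?thesis using rx by blast
  next
    assume "- r \<in> hyp" thus ?thesis using rx by (intro bexI[of _ "-r"]) simp_all
  qed
qed



lemma disc_cyclic: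
  fixes L :: "real set"
  assumes z: "0 \<in> L" and ad: "\<And>a b. a\<in>L \<Longrightarrow> b\<in>L \<Longrightarrow> a+b \<in> L" and ng: "\<And>a. a\<in>L \<Longrightarrow> -a \<in> L"
    and x: "x\<in>L" "x\<noteq>0" and dp: "\<delta>>0" and sep: "\<And>a. a\<in>L \<Longrightarrow> a\<noteq>0 \<Longrightarrow> \<delta> \<le> \<bar>a\<bar>"
  shows "\<exists>d>0. L = range (\<lambda>n::int. of_int n * d)"
proof -
  have sb: "\<And>a b. a\<in>L \<Longrightarrow> b\<in>L \<Longrightarrow> a-b \<in> L" using ad ng by (metis diff_conv_add_uminus)
  define S where "S = {a\<in>L. a>0}"
  have "\<bar>x\<bar> \<in> S" using x ng by (cases "x \<ge> 0") (auto simp: S_def)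
  hence Sne: "S \<noteq> {}" by auto
  have Slow: "\<And>a. a \<in> S \<Longrightarrow> \<delta> \<le> a" using sep by (fastforce simp: S_def)
  hence bdd: "bdd_below S" by (auto simp: bdd_below_def)
  define d where "d = Inf S"
  have dge: "\<delta> \<le> d" unfolding d_def using Sne Slow by (intro cInf_greatest) auto
  have dlow: "\<And>a. a \<in> S \<Longrightarrow> d \<le> a" unfolding d_def using bdd by (simp add: cInf_lower)
  have dS: "d \<in> S"
  proof (rule ccontr)
    assume nd: "d \<notin> S"
    have "Inf S < d + \<delta>" using dp d_def by simp
    then obtain a1 where a1: "a1 \<in> S" "a1 < d + \<delta>" using cInf_less_iff[OF Sne bdd] by auto
    have "a1 \<noteq> d" using a1 nd by auto
    hence "Inf S < a1" using dlow[OF a1(1)] d_def by simp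
    then obtain a2 where a2: "a2 \<in> S" "a2 < a1" using cInf_less_iff[OF Sne bdd] by auto
    have "a1 - a2 \<in> L" using a1 a2 sb by (auto simp: S_def)
    moreover have "a1 - a2 \<noteq> 0" "\<bar>a1 - a2\<bar> < \<delta>" using a1 a2 dlow[OF a2(1)] by auto
    ultimately show False using sep by fastforce
  qed
  hence dL: "d \<in> L" and d0: "d > 0" by (auto simp: S_def)
  have natm: "of_nat n * d \<in> L" for n :: nat
    by (induction n) (auto simp: z algebra_simps intro: ad[OF dL])
  have intm: "of_int n * d \<in> L" for n :: int
  proof (cases "n \<ge> 0")
    case True thus ?thesis using natm[of "nat n"] by simp
  next
    case False thus ?thesis using ng[OF natm[of "nat (-n)"]] by simp
  qed
  have "L = range (\<lambda>n::int. of_int n * d)"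
  proof
    show "range (\<lambda>n::int. of_int n * d) \<subseteq> L" using intm by auto
  next
    show "L \<subseteq> range (\<lambda>n::int. of_int n * d)"
    proof
      fix a assume aL: "a \<in> L"
      define n where "n = \<lfloor>a / d\<rfloor>"
      define r where "r = a - of_int n * d"
      have rL: "r \<in> L" using sb[OF aL intm] r_def by simp
      have "of_int n \<le> a / d" "a / d < of_int n + 1" using n_def by linarith+
      hence "of_int n * d \<le> a" "a < (of_int n + 1) * d" using d0 by (auto simp: field_simps)
      hence r0: "0 \<le> r" "r < d" by (auto simp: r_def algebra_simps)
      have "r = 0"
      proof (rule ccontr)
        assume "r \<noteq> 0" hence "r \<in> S" using r0 rL by (auto simp: S_def)
        thus False using dlow r0 by fastforce
      qed
      thus "a \<in> range (\<lambda>n::int. of_int n * d)" using r_def by auto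
    qed
  qed
  thus ?thesis using d0 by auto
qed


lemma null_perp_psd:
  assumes "lor u u = 0" "u \<noteq> 0" "lor x u = 0" shows "lor x x \<ge> 0"
proof -
  let ?U = "fst u" and ?s = "snd u" and ?X = "fst x" and ?t = "snd x"
  have UU: "?U \<bullet> ?U = ?s^2" using assms(1) by (simp add: lor_def power2_eq_square)
  have s0: "?s \<noteq> 0"
  proof
    assume "?s = 0" hence "?U = 0" using UU by simp
    thus False using \<open>?s = 0\<close> assms(2) by (simp add: prod_eq_iff)
  qed
  have XU: "?X \<bullet> ?U = ?t * ?s" using assms(3) by (simp add: lor_def)
  have "(?t * ?s)^2 \<le> (?X \<bullet> ?X) * ?s^2" using Cauchy_Schwarz_ineq[of ?X ?U] XU UU by simp
  hence "?t^2 * ?s^2 \<le> (?X \<bullet> ?X) * ?s^2" by (simp add: power_mult_distrib)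
  hence "?t^2 \<le> ?X \<bullet> ?X" using s0 by (simp add: mult_le_cancel_right)
  thus ?thesis by (simp add: lor_def power2_eq_square)
qed

lemma null_perp_parallel:
  assumes "lor u u = 0" "u \<noteq> 0" "lor y u = 0" "lor y y = 0"
  shows "y = (snd y / snd u) *\<^sub>R u"
proof -
  let ?U = "fst u" and ?s = "snd u" and ?Y = "fst y" and ?t = "snd y"
  have UU: "?U \<bullet> ?U = ?s^2" using assms(1) by (simp add: lor_def power2_eq_square)
  have YY: "?Y \<bullet> ?Y = ?t^2" using assms(4) by (simp add: lor_def power2_eq_square)
  have s0: "?s \<noteq> 0"
  proof
    assume "?s = 0" hence "?U = 0" using UU by simp
    thus False using \<open>?s = 0\<close> assms(2) by (simp add: prod_eq_iff)
  qed
  have YU: "?Y \<bullet> ?U = ?t * ?s" using assms(3) by (simp add: lor_def)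
  define c where "c = ?t / ?s"
  have "(?Y - c *\<^sub>R ?U) \<bullet> (?Y - c *\<^sub>R ?U) = ?Y \<bullet> ?Y - c * (?Y \<bullet> ?U) - c * (?U \<bullet> ?Y) + c * c * (?U \<bullet> ?U)"
    by (simp add: inner_diff_left inner_diff_right inner_commute[of "fst u" "fst y"] algebra_simps)
  also have "\<dots> = 0" using s0 unfolding YY YU UU inner_commute[of "fst u" "fst y"] c_def by (simp add: field_simps power2_eq_square)
  finally have "?Y - c *\<^sub>R ?U = 0" by (simp only: inner_eq_zero_iff)
  hence Yc: "?Y = c *\<^sub>R ?U" by simp
  have tc: "?t = c * ?s" using s0 c_def by simp
  have "y = c *\<^sub>R u" by (rule prod_eqI) (simp_all only: Yc tc fst_scaleR snd_scaleR real_scaleR_def)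
  thus ?thesis by (simp only: c_def)
qed

locale frame =
  fixes w u :: "'a::euclidean_space \<times> real"
  assumes ww: "lor w w = 1" and uu: "lor u u = 0" and wu: "lor w u = 0"
begin

definition R :: "real \<Rightarrow> ('a \<times> real) \<Rightarrow> ('a \<times> real)" where
  "R c = hrefl (w + c *\<^sub>R u)"

definition T :: "real \<Rightarrow> ('a \<times> real) \<Rightarrow> ('a \<times> real)" where
  "T m = (\<lambda>p\<in>hyp. p + (- m * lor p u) *\<^sub>R w + (m * lor p w - m^2/2 * lor p u) *\<^sub>R u)"

lemma uw: "lor u w = 0" using wu lor_sym by metis

lemma lorF: "lor (p + a *\<^sub>R w + b *\<^sub>R u) w = lor p w + a"
  "lor (p + a *\<^sub>R w + b *\<^sub>R u) u = lor p u"
  by (simp_all add: ww uu wu uw)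

lemma norm_wc: "lor (w + c *\<^sub>R u) (w + c *\<^sub>R u) = 1"
  by (simp add: ww uu wu uw)

lemma R_Bij: "R c \<in> Bij hyp"
  unfolding R_def by (rule hrefl_Bij) (simp add: ww uu wu uw)

lemma R_hyp: "p \<in> hyp \<Longrightarrow> R c p \<in> hyp"
  unfolding R_def by (rule hrefl_in_hyp) (simp_all add: ww uu wu uw)

lemma R_invol: "p \<in> hyp \<Longrightarrow> R c (R c p) = p"
  unfolding R_def by (rule hrefl_invol) (simp_all add: ww uu wu uw)

lemma R_apply: "p \<in> hyp \<Longrightarrow> R c p = p + (-2*(lor p w + c*lor p u)) *\<^sub>R w + (-2*c*(lor p w + c*lor p u)) *\<^sub>R u"
  unfolding R_def by (simp add: hrefl_apply ww uu wu uw algebra_simps)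

lemma F_add: "(p + a *\<^sub>R w + b *\<^sub>R u) + a' *\<^sub>R w + b' *\<^sub>R u = p + (a + a') *\<^sub>R w + (b + b') *\<^sub>R u"
  by (simp add: algebra_simps)

lemma T_apply: "p \<in> hyp \<Longrightarrow> T m p = p + (- m * lor p u) *\<^sub>R w + (m * lor p w - m^2/2 * lor p u) *\<^sub>R u"
  by (simp add: T_def)

lemma RR: assumes "p \<in> hyp" shows "R a (R b p) = T (2*(a-b)) p"
proof -
  define Pw where "Pw = lor p w"
  define Pu where "Pu = lor p u"
  define A where "A = -2*(Pw + b*Pu)"
  define B where "B = -2*b*(Pw + b*Pu)"
  have 1: "R b p = p + A *\<^sub>R w + B *\<^sub>R u" using R_apply[OF assms] by (simp add: A_def B_def Pw_def Pu_def)
  have 2: "R a (R b p) = (p + A *\<^sub>R w + B *\<^sub>R u) + (-2*(Pw + A + a*Pu)) *\<^sub>R w + (-2*a*(Pw + A + a*Pu)) *\<^sub>R u"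
    using R_apply[OF R_hyp[OF assms, of b], of a] unfolding 1 lorF Pw_def Pu_def .
  have 3: "T (2*(a-b)) p = p + (- (2*(a-b)) * Pu) *\<^sub>R w + ((2*(a-b)) * Pw - (2*(a-b))^2/2 * Pu) *\<^sub>R u"
    unfolding Pw_def Pu_def by (rule T_apply[OF assms])
  have e1: "A + (-2*(Pw + A + a*Pu)) = - (2*(a-b)) * Pu" by (simp add: A_def algebra_simps)
  have e2: "B + (-2*a*(Pw + A + a*Pu)) = (2*(a-b)) * Pw - (2*(a-b))^2/2 * Pu"
    by (simp add: A_def B_def field_simps power2_eq_square)
  show ?thesis unfolding 2 3 F_add e1 e2 ..
qed

lemma T_hyp: assumes "p \<in> hyp" shows "T m p \<in> hyp"
proof -
  have "R (m/2) (R 0 p) \<in> hyp" using R_hyp[OF R_hyp[OF assms]] .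
  then show ?thesis by (simp add: RR[OF assms])
qed

lemma TR: assumes "p \<in> hyp" shows "T m (R c p) = R (c + m/2) p"
  using RR[OF R_hyp[OF assms, of c], of "c + m/2" c] R_invol[OF assms, of c] by simp

lemma RT: assumes "p \<in> hyp" shows "R c (T m p) = R (c - m/2) p"
  using RR[OF assms, of c "c - m/2"] R_invol[OF R_hyp[OF assms, of "c - m/2"], of c] by simp

lemma TT: assumes "p \<in> hyp" shows "T a (T b p) = T (a + b) p"
proof -
  have "T b p = R 0 (R (-b/2) p)" using RR[OF assms, of 0 "-b/2"] by simp
  hence "T a (T b p) = R (a/2) (R 0 (R 0 (R (-b/2) p)))" using RR[OF R_hyp[OF R_hyp[OF assms]], of "a/2" 0] by simp
  also have "\<dots> = R (a/2) (R (-b/2) p)" using R_invol[OF R_hyp[OF assms]] by simp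
  also have "\<dots> = T (a + b) p" using RR[OF assms] by (simp add: algebra_simps)
  finally show ?thesis .
qed

lemma T_lor: assumes "p \<in> hyp" shows "lor (T m p) p = -1 - m^2/2 * (lor p u)^2"
proof -
  have pp: "lor p p = -1" using assms by (simp add: hyp_def)
  show ?thesis using assms pp by (simp add: T_apply lor_sym[of w p] lor_sym[of u p] algebra_simps power2_eq_square)
qed

lemma R_out: "p \<notin> hyp \<Longrightarrow> R c p = undefined"
  by (simp add: R_def hrefl_def)

lemma T_out: "p \<notin> hyp \<Longrightarrow> T m p = undefined"
  by (simp add: T_def)

abbreviation "G \<equiv> BijGroup (hyp :: ('a \<times> real) set)"

lemma mult_G: "f \<in> Bij hyp \<Longrightarrow> g \<in> Bij hyp \<Longrightarrow> f \<otimes>\<^bsub>G\<^esub> g = (\<lambda>x\<in>hyp. f (g x))"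
  by (simp add: BijGroup_def compose_def)

lemma carrier_G: "carrier G = Bij hyp" by (simp add: BijGroup_def)

lemma RR_G: "R a \<otimes>\<^bsub>G\<^esub> R b = T (2*(a-b))"
  by (auto simp: mult_G R_Bij RR T_out)

lemma T_Bij: "T m \<in> Bij hyp"
proof -
  have "R (m/2) \<otimes>\<^bsub>G\<^esub> R 0 \<in> carrier G"
    using R_Bij monoid.m_closed[OF group.is_monoid[OF group_BijGroup]] carrier_G by metis
  thus ?thesis using RR_G[of "m/2" 0] by (simp add: carrier_G)
qed

lemma TT_G: "T a \<otimes>\<^bsub>G\<^esub> T b = T (a+b)"
  by (auto simp: mult_G T_Bij TT T_out)

lemma TR_G: "T m \<otimes>\<^bsub>G\<^esub> R c = R (c + m/2)"
  by (auto simp: mult_G T_Bij R_Bij TR R_out)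

lemma RT_G: "R c \<otimes>\<^bsub>G\<^esub> T m = R (c - m/2)"
  by (auto simp: mult_G T_Bij R_Bij RT R_out)

lemma one_G: "\<one>\<^bsub>G\<^esub> = T 0"
  by (auto simp: BijGroup_def T_def)

lemma inv_R: "inv\<^bsub>G\<^esub> (R c) = R c"
proof -
  have "R c \<otimes>\<^bsub>G\<^esub> R c = \<one>\<^bsub>G\<^esub>" by (simp add: RR_G one_G)
  thus ?thesis using group.inv_equality[OF group_BijGroup] R_Bij carrier_G by metis
qed

lemma generate_sub:
  assumes "H \<subseteq> range R"
  shows "generate G H \<subseteq> range T \<union> range R"
proof
  fix x assume "x \<in> generate G H"
  thus "x \<in> range T \<union> range R"
  proof (induction rule: generate.induct)
    case one thus ?case by (simp add: one_G)
  next
    case (incl h) thus ?case using assms by auto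
  next
    case (inv h) thus ?case using assms inv_R by auto
  next
    case (eng h1 h2) thus ?case using RR_G TT_G TR_G RT_G by auto
  qed
qed

end



lemma tendsto_lor[tendsto_intros]:
  "(f \<longlongrightarrow> a) F \<Longrightarrow> (g \<longlongrightarrow> b) F \<Longrightarrow> ((\<lambda>x. lor (f x) (g x)) \<longlongrightarrow> lor a b) F"
  unfolding lor_def by (intro tendsto_intros)

lemma ray_cosh:
  assumes "geodesic_ray \<gamma>" "t \<ge> 0" shows "- lor (\<gamma> 0) (\<gamma> t) = cosh t"
proof -
  have h: "\<gamma> 0 \<in> hyp" "\<gamma> t \<in> hyp" using assms by (auto simp: geodesic_ray_def)
  have "hdist (\<gamma> 0) (\<gamma> t) = t" using assms by (auto simp: geodesic_ray_def)
  hence "arcosh (- lor (\<gamma> 0) (\<gamma> t)) = t" by (simp add: hdist_def)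
  moreover have "- lor (\<gamma> 0) (\<gamma> t) \<ge> 1" using hyp_lor_neg[OF h] by simp
  ultimately show ?thesis using cosh_arcosh_real by metis
qed

lemma hyp_norm_bound:
  assumes "p \<in> hyp" "q \<in> hyp" shows "norm q \<le> 4 * snd p * (- lor p q)"
proof -
  let ?x = "fst p" and ?y = "fst q" and ?s = "snd p" and ?t = "snd q"
  note hp = hyp_basic[OF assms(1)] and hq = hyp_basic[OF assms(2)]
  have s0: "?s > 0" "?t > 0" using hp hq by auto
  have cs: "(?x \<bullet> ?y)\<^sup>2 \<le> (?s^2 - 1) * (?t^2 - 1)"
    using Cauchy_Schwarz_ineq[of ?x ?y] hp hq by simp
  also have "\<dots> \<le> (?s^2 - 1) * ?t^2" using hp by (intro mult_left_mono) (auto simp: one_le_power)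
  also have "\<dots> \<le> (?t * (2 * ?s^2 - 1) / (2 * ?s))\<^sup>2"
  proof -
    have "(?s^2 - 1) * ?t^2 * (4 * ?s^2) \<le> ?t^2 * (2 * ?s^2 - 1)\<^sup>2"
    proof -
      have "?t^2 * (2 * ?s^2 - 1)\<^sup>2 - (?s^2 - 1) * ?t^2 * (4 * ?s^2) = ?t^2"
        by (simp add: power2_eq_square algebra_simps)
      thus ?thesis by (smt (verit) zero_le_power2)
    qed
    moreover have "(?t * (2*?s^2-1) / (2*?s))\<^sup>2 = ?t^2 * (2*?s^2-1)\<^sup>2 / (4*?s^2)"
      by (simp add: power_divide power_mult_distrib)
    moreover have "4*?s^2 > 0" using s0 by simp
    ultimately show ?thesis by (simp add: pos_le_divide_eq)
  qed
  finally have "(?x \<bullet> ?y)\<^sup>2 \<le> (?t * (2 * ?s^2 - 1) / (2 * ?s))\<^sup>2" .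
  moreover have "?t * (2 * ?s^2 - 1) / (2 * ?s) \<ge> 0"
  proof -
    have "?s^2 \<ge> 1" using hp by (simp add: one_le_power)
    hence "2 * ?s^2 - 1 \<ge> 0" by simp
    thus ?thesis using s0 by simp
  qed
  ultimately have "?x \<bullet> ?y \<le> ?t * (2 * ?s^2 - 1) / (2 * ?s)"
    by (metis abs_ge_self order_trans power2_abs power2_le_imp_le)
  also have "\<dots> = ?s * ?t - ?t / (2 * ?s)" using s0 by (simp add: field_simps power2_eq_square)
  finally have "?t / (2 * ?s) \<le> - lor p q" by (simp add: lor_def)
  hence t2: "?t \<le> 2 * ?s * (- lor p q)" using s0 by (simp add: field_simps)
  have "(norm q)\<^sup>2 = q \<bullet> q" by (rule power2_norm_eq_inner)
  also have "\<dots> = ?y \<bullet> ?y + ?t^2" by (simp add: inner_prod_def power2_eq_square)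
  also have "\<dots> \<le> (2 * ?t)\<^sup>2"
  proof -
    have "?y \<bullet> ?y + ?t^2 = 2*?t^2 - 1" using hq(1) by simp
    moreover have "(2*?t)\<^sup>2 = 4 * ?t^2" by (simp add: power_mult_distrib)
    moreover have "?t^2 \<ge> 0" by simp
    ultimately show ?thesis by linarith
  qed
  finally have n2: "(norm q)\<^sup>2 \<le> (2 * ?t)\<^sup>2" .
  have "norm q \<le> 2 * ?t" using power2_le_imp_le[OF n2] s0 by simp
  thus ?thesis using t2 by linarith
qed

lemma hdist_le:
  assumes "p \<in> hyp" "q \<in> hyp" "hdist p q \<le> C" shows "- lor p q \<le> cosh C"
proof -
  define y where "y = - lor p q"
  have y1: "y \<ge> 1" using hyp_lor_neg[OF assms(1,2)] y_def by simp
  have a: "arcosh y \<le> C" using assms(3) by (simp add: hdist_def y_def)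
  have a0: "arcosh y \<ge> 0" using y1 by simp
  have "cosh (arcosh y) \<le> cosh C" using a a0 by (subst cosh_real_nonneg_le_iff) auto
  thus ?thesis using y1 y_def by simp
qed

lemma ray_facts:
  assumes "geodesic_ray \<gamma>"
  shows "norm (inverse (cosh (real n)) *\<^sub>R \<gamma> (real n)) \<le> 4 * snd (\<gamma> 0)"
    and "lor (inverse (cosh (real n)) *\<^sub>R \<gamma> (real n)) (inverse (cosh (real n)) *\<^sub>R \<gamma> (real n))
           = - (inverse (cosh (real n)))\<^sup>2"
    and "lor (\<gamma> 0) (inverse (cosh (real n)) *\<^sub>R \<gamma> (real n)) = -1"
proof -
  have h: "\<gamma> 0 \<in> hyp" "\<gamma> (real n) \<in> hyp" using assms by (auto simp: geodesic_ray_def)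
  have cc: "- lor (\<gamma> 0) (\<gamma> (real n)) = cosh (real n)" using ray_cosh[OF assms] by simp
  have cp: "cosh (real n) > 0" by simp
  have "norm (\<gamma> (real n)) \<le> 4 * snd (\<gamma> 0) * cosh (real n)"
    using hyp_norm_bound[OF h] cc by simp
  thus "norm (inverse (cosh (real n)) *\<^sub>R \<gamma> (real n)) \<le> 4 * snd (\<gamma> 0)"
    using cp by (simp add: field_simps)
  show "lor (inverse (cosh (real n)) *\<^sub>R \<gamma> (real n)) (inverse (cosh (real n)) *\<^sub>R \<gamma> (real n))
           = - (inverse (cosh (real n)))\<^sup>2"
    using h(2) by (simp add: hyp_def power2_eq_square)
  show "lor (\<gamma> 0) (inverse (cosh (real n)) *\<^sub>R \<gamma> (real n)) = -1"
    using cc cp by (simp add: field_simps)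
qed

lemma lim_eq_helper:
  fixes a b :: real
  assumes "X \<longlonglongrightarrow> a" "X = Y" "Y \<longlonglongrightarrow> b" shows "a = b"
proof -
  from assms(1,2) have "Y \<longlonglongrightarrow> a" by simp
  thus ?thesis using assms(3) by (rule LIMSEQ_unique)
qed

lemma ideal_null:
  fixes v :: "nat \<Rightarrow> ('a::euclidean_space \<times> real)"
  assumes ray: "geodesic_ray \<xi>" and hi: "\<forall>i<k. has_ideal_point (hplane (v i)) \<xi>"
  shows "\<exists>u. lor u u = 0 \<and> u \<noteq> 0 \<and> (\<forall>i<k. lor u (v i) = 0)"
proof -
  define c where "c = (\<lambda>n::nat. cosh (real n))"
  have ic: "(\<lambda>n. inverse (c n)) \<longlonglongrightarrow> 0"
    unfolding c_def by (rule tendsto_inverse_0_at_top[OF filterlim_compose[OF cosh_real_at_top filterlim_real_sequentially]])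
  define f where "f = (\<lambda>n. inverse (c n) *\<^sub>R \<xi> (real n))"
  have "bounded (range f)" unfolding bounded_iff
    by (rule exI[of _ "4 * snd (\<xi> 0)"]) (use ray_facts(1)[OF ray] in \<open>auto simp: f_def c_def\<close>)
  then obtain u r where r: "strict_mono r" and fu: "(f \<circ> r) \<longlonglongrightarrow> u"
    using bounded_imp_convergent_subsequence by blast
  have fu2: "(\<lambda>n. f (r n)) \<longlonglongrightarrow> u" using fu unfolding comp_def .
  have ir: "(\<lambda>n. inverse (c (r n))) \<longlonglongrightarrow> 0" using LIMSEQ_subseq_LIMSEQ[OF ic r] by (simp add: o_def)
  have "(\<lambda>n. lor (f (r n)) (f (r n))) \<longlonglongrightarrow> lor u u" using fu2 by (intro tendsto_intros)
  moreover have "(\<lambda>n. lor (f (r n)) (f (r n))) = (\<lambda>n. - (inverse (c (r n)))\<^sup>2)"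
    unfolding f_def c_def using ray_facts(2)[OF ray] by simp
  moreover have "(\<lambda>n. - (inverse (c (r n)))\<^sup>2) \<longlonglongrightarrow> - (0\<^sup>2)" using ir by (intro tendsto_intros)
  ultimately have "lor u u = - (0\<^sup>2)" by (rule lim_eq_helper)
  hence uu: "lor u u = 0" by simp
  have "(\<lambda>n. lor (\<xi> 0) (f (r n))) \<longlonglongrightarrow> lor (\<xi> 0) u" using fu2 by (intro tendsto_intros)
  moreover have "(\<lambda>n. lor (\<xi> 0) (f (r n))) = (\<lambda>n. -1)"
    unfolding f_def c_def using ray_facts(3)[OF ray] by simp
  ultimately have "lor (\<xi> 0) u = -1" by (rule lim_eq_helper) simp
  hence u0: "u \<noteq> 0" by auto
  have "lor u (v i) = 0" if i: "i < k" for i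
  proof -
    obtain \<delta> where d: "geodesic_ray \<delta>" "\<forall>t\<ge>0. \<delta> t \<in> hplane (v i)" "asymptotic \<delta> \<xi>"
      using hi i by (auto simp: has_ideal_point_def)
    obtain C where C: "\<forall>t\<ge>0. hdist (\<delta> t) (\<xi> t) \<le> C" using d(3) by (auto simp: asymptotic_def)
    define g where "g = (\<lambda>n. inverse (c (r n)) *\<^sub>R \<delta> (real (r n)))"
    have "bounded (range g)" unfolding bounded_iff
      by (rule exI[of _ "4 * snd (\<delta> 0)"]) (use ray_facts(1)[OF d(1)] in \<open>auto simp: g_def c_def\<close>)
    then obtain w r' where r': "strict_mono r'" and gw: "(g \<circ> r') \<longlonglongrightarrow> w"
      using bounded_imp_convergent_subsequence by blast
    have ir': "(\<lambda>n. inverse (c (r (r' n)))) \<longlonglongrightarrow> 0" using LIMSEQ_subseq_LIMSEQ[OF ir r'] by (simp add: o_def)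
    have fu': "(\<lambda>n. f (r (r' n))) \<longlonglongrightarrow> u" using LIMSEQ_subseq_LIMSEQ[OF fu r'] by (simp add: o_def)
    have gw': "(\<lambda>n. g (r' n)) \<longlonglongrightarrow> w" using gw by (simp add: o_def)
    have "(\<lambda>n. lor (g (r' n)) (g (r' n))) \<longlonglongrightarrow> lor w w" using gw' by (intro tendsto_intros)
    moreover have "(\<lambda>n. lor (g (r' n)) (g (r' n))) = (\<lambda>n. - (inverse (c (r (r' n))))\<^sup>2)"
      unfolding g_def c_def using ray_facts(2)[OF d(1)] by simp
    moreover have "(\<lambda>n. - (inverse (c (r (r' n))))\<^sup>2) \<longlonglongrightarrow> - (0\<^sup>2)" using ir' by (intro tendsto_intros)
    ultimately have "lor w w = - (0\<^sup>2)" by (rule lim_eq_helper)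
    hence ww: "lor w w = 0" by simp
    have "(\<lambda>n. lor (\<delta> 0) (g (r' n))) \<longlonglongrightarrow> lor (\<delta> 0) w" using gw' by (intro tendsto_intros)
    moreover have "(\<lambda>n. lor (\<delta> 0) (g (r' n))) = (\<lambda>n. -1)"
      unfolding g_def c_def using ray_facts(3)[OF d(1)] by simp
    ultimately have "lor (\<delta> 0) w = -1" by (rule lim_eq_helper) simp
    hence w0: "w \<noteq> 0" by auto
    have "(\<lambda>n. lor (g (r' n)) (v i)) \<longlonglongrightarrow> lor w (v i)" using gw' by (intro tendsto_intros)
    moreover have "(\<lambda>n. lor (g (r' n)) (v i)) = (\<lambda>n. 0)"
      using d(2) by (auto simp: g_def hplane_def)
    ultimately have wv: "lor w (v i) = 0" by (rule lim_eq_helper) simp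
    have lim1: "(\<lambda>n. lor (g (r' n)) (f (r (r' n)))) \<longlonglongrightarrow> lor w u" using gw' fu' by (intro tendsto_intros)
    have bnd: "norm (lor (g (r' n)) (f (r (r' n)))) \<le> cosh C * (inverse (c (r (r' n))))\<^sup>2" for n
    proof -
      let ?m = "real (r (r' n))"
      have hh: "\<delta> ?m \<in> hyp" "\<xi> ?m \<in> hyp" using d(1) ray by (auto simp: geodesic_ray_def)
      have "hdist (\<delta> ?m) (\<xi> ?m) \<le> C" using C by simp
      hence "- lor (\<delta> ?m) (\<xi> ?m) \<le> cosh C" using hdist_le[OF hh] by blast
      moreover have "lor (\<delta> ?m) (\<xi> ?m) \<le> -1" using hyp_lor_neg[OF hh] .
      ultimately have ab: "\<bar>lor (\<delta> ?m) (\<xi> ?m)\<bar> \<le> cosh C" by simp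
      have ab2: "(inverse (c (r (r' n))))\<^sup>2 * \<bar>lor (\<delta> ?m) (\<xi> ?m)\<bar> \<le> (inverse (c (r (r' n))))\<^sup>2 * cosh C"
        by (rule mult_left_mono[OF ab]) simp
      have "lor (g (r' n)) (f (r (r' n))) = (inverse (c (r (r' n))))\<^sup>2 * lor (\<delta> ?m) (\<xi> ?m)"
        by (simp add: g_def f_def power2_eq_square)
      thus ?thesis using ab2 by (simp only: real_norm_def abs_mult abs_power2 mult.commute)
    qed
    have "(\<lambda>n. cosh C * (inverse (c (r (r' n))))\<^sup>2) \<longlonglongrightarrow> cosh C * 0\<^sup>2" using ir' by (intro tendsto_intros)
    hence lim0: "(\<lambda>n. cosh C * (inverse (c (r (r' n))))\<^sup>2) \<longlonglongrightarrow> 0" by simp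
    have "(\<lambda>n. lor (g (r' n)) (f (r (r' n)))) \<longlonglongrightarrow> 0"
      by (rule Lim_null_comparison[OF always_eventually[OF allI[OF bnd]] lim0])
    hence wu: "lor w u = 0" using LIMSEQ_unique[OF lim1] by simp
    obtain \<mu> where wm: "w = \<mu> *\<^sub>R u" using null_perp_parallel[OF uu u0 wu ww] by blast
    hence "lor w (v i) = \<mu> * lor u (v i)" by simp
    moreover have "\<mu> \<noteq> 0" using w0 wm by auto
    ultimately show ?thesis using wv by simp
  qed
  thus ?thesis using uu u0 by blast
qed



lemma group_DInf: "group DInf"
proof (rule groupI)
  show "\<one>\<^bsub>DInf\<^esub> \<in> carrier DInf" by (simp add: DInf_def)
next
  fix x y assume "x \<in> carrier DInf" "y \<in> carrier DInf"
  thus "x \<otimes>\<^bsub>DInf\<^esub> y \<in> carrier DInf" by (auto simp: DInf_def)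
next
  fix x y z assume "x \<in> carrier DInf" "y \<in> carrier DInf" "z \<in> carrier DInf"
  thus "x \<otimes>\<^bsub>DInf\<^esub> y \<otimes>\<^bsub>DInf\<^esub> z = x \<otimes>\<^bsub>DInf\<^esub> (y \<otimes>\<^bsub>DInf\<^esub> z)"
    by (cases x, cases y, cases z) (simp add: DInf_def algebra_simps)
next
  fix x assume "x \<in> carrier DInf"
  thus "\<one>\<^bsub>DInf\<^esub> \<otimes>\<^bsub>DInf\<^esub> x = x" by (cases x) (simp add: DInf_def)
next
  fix x assume x: "x \<in> carrier DInf"
  obtain e m where xe: "x = (e, m)" by (cases x)
  have e: "e = 1 \<or> e = -1" using x xe by (simp add: DInf_def)
  show "\<exists>y\<in>carrier DInf. y \<otimes>\<^bsub>DInf\<^esub> x = \<one>\<^bsub>DInf\<^esub>"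
    by (rule bexI[of _ "(e, - e * m)"]) (use e in \<open>auto simp: DInf_def xe\<close>)
qed

lemma lor_bound: "\<bar>lor x y\<bar> \<le> 2 * norm x * norm y"
proof -
  have "\<bar>fst x \<bullet> fst y\<bar> \<le> norm (fst x) * norm (fst y)" by (rule Cauchy_Schwarz_ineq2)
  also have "\<dots> \<le> norm x * norm y" by (intro mult_mono) (auto simp: norm_fst_le[of "fst x" "snd x", simplified] norm_fst_le[of "fst y" "snd y", simplified])
  finally have 1: "\<bar>fst x \<bullet> fst y\<bar> \<le> norm x * norm y" .
  have "\<bar>snd x * snd y\<bar> = norm (snd x) * norm (snd y)" by (simp add: abs_mult)
  also have "\<dots> \<le> norm x * norm y" by (intro mult_mono) (auto simp: norm_snd_le[of "snd x" "fst x", simplified] norm_snd_le[of "snd y" "fst y", simplified])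
  finally have 2: "\<bar>snd x * snd y\<bar> \<le> norm x * norm y" .
  show ?thesis using 1 2 by (simp add: lor_def abs_diff_le_iff) linarith?
qed

locale frame2 = frame + assumes u0: "u \<noteq> 0"
begin

lemma hyp_u: "p \<in> hyp \<Longrightarrow> lor p u \<noteq> 0"
  using null_perp_psd[OF uu u0, of p] by (auto simp: hyp_def)

lemma T0: "p \<in> hyp \<Longrightarrow> T 0 p = p" by (simp add: T_apply)

lemma T_fix: assumes "p \<in> hyp" "T m p = p" shows "m = 0"
proof -
  have "lor (T m p) p = -1" using assms by (simp add: hyp_def)
  hence "m^2/2 * (lor p u)^2 = 0" using T_lor[OF assms(1)] by simp
  thus ?thesis using hyp_u[OF assms(1)] by simp
qed

definition p0 :: "'a \<times> real" where "p0 = (0, 1)"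
lemma p0: "p0 \<in> hyp" by (simp add: p0_def hyp_def lor_def)

lemma T_inj: assumes "T a = T b" shows "a = b"
proof -
  have "T a (T (-b) p0) = T b (T (-b) p0)" using assms by simp
  hence "T (a - b) p0 = T 0 p0" using TT[OF p0] by simp
  hence "T (a - b) p0 = p0" using T0[OF p0] by simp
  hence "a - b = 0" by (rule T_fix[OF p0])
  thus ?thesis by simp
qed

lemma R_inj: assumes "R a = R b" shows "a = b"
proof -
  have "R a (R b p0) = p0" using assms R_invol[OF p0] by simp
  hence "T (2*(a-b)) p0 = p0" using RR[OF p0] by simp
  hence "2*(a-b) = 0" by (rule T_fix[OF p0])
  thus ?thesis by simp
qed

lemma T_ne_R: "T m \<noteq> R c"
proof
  assume eq: "T m = R c"
  define c' where "c' = c + m/2"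
  have fix1: "R c' p = p" if "p \<in> hyp" for p
  proof -
    have "R c' p = T m (R c p)" using TR[OF that] c'_def by simp
    also have "\<dots> = p" using eq R_invol[OF that] by simp
    finally show ?thesis .
  qed
  have fix2: "T (-2) p = R (c'+1) p" if "p \<in> hyp" for p
  proof -
    have "T (-2) p = R c' (R (c'+1) p)" using RR[OF that, of c' "c'+1"] by simp
    also have "\<dots> = R (c'+1) p" using fix1[OF R_hyp[OF that]] .
    finally show ?thesis .
  qed
  have "T (-4) p0 = T (-2) (T (-2) p0)" using TT[OF p0] by simp
  also have "\<dots> = R (c'+1) (T (-2) p0)" by (rule fix2[OF T_hyp[OF p0]])
  also have "\<dots> = R (c'+1) (R (c'+1) p0)" by (simp only: fix2[OF p0])
  also have "\<dots> = p0" using R_invol[OF p0] .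
  finally have "(-4::real) = 0" by (rule T_fix[OF p0])
  thus False by simp
qed

end



lemma normal_form:
  assumes uu: "lor u u = 0" and u0: "u \<noteq> 0" and ww: "lor w w = 1" and wu: "lor w u = 0"
    and vv: "lor v v > 0" and vu: "lor v u = 0" and disj: "hplane v \<inter> hplane w = {}"
  shows "\<exists>l c. l \<noteq> 0 \<and> v = l *\<^sub>R (w + c *\<^sub>R u)"
proof -
  define s where "s = sqrt (lor v v)"
  have s0: "s > 0" using vv s_def by simp
  have ss: "s * s = lor v v" using vv s_def by simp
  define x where "x = (1/s) *\<^sub>R v"
  have xx: "lor x x = 1" using s0 ss vv by (simp add: x_def)
  have xu: "lor x u = 0" using vu by (simp add: x_def)
  have vx: "v = s *\<^sub>R x" using s0 by (simp add: x_def)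
  define a where "a = lor x w"
  have wx: "lor w x = a" by (simp add: a_def lor_sym)
  have xw: "lor x w = a" by (simp add: a_def)
  have "lor (x - w) u = 0" using xu wu by simp
  hence "lor (x - w) (x - w) \<ge> 0" by (rule null_perp_psd[OF uu u0])
  hence "2 - 2 * a \<ge> 0" using xx ww by (simp add: xw wx)
  moreover have "lor (x + w) u = 0" using xu wu by simp
  hence "lor (x + w) (x + w) \<ge> 0" by (rule null_perp_psd[OF uu u0])
  hence "2 + 2 * a \<ge> 0" using xx ww by (simp add: xw wx)
  ultimately have a1: "\<bar>a\<bar> \<le> 1" by linarith
  have "\<not> \<bar>a\<bar> < 1"
  proof
    assume "\<bar>a\<bar> < 1"
    then obtain p where p: "p \<in> hyp" "lor p x = 0" "lor p w = 0"
      using hplanes_meet[OF xx ww] a_def by blast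
    have "lor p v = 0" using p(2) vx by simp
    hence "p \<in> hplane v \<inter> hplane w" using p by (simp add: hplane_def)
    thus False using disj by simp
  qed
  hence aa: "a * a = 1" using a1
    by (cases "a \<ge> 0") (auto simp: abs_if)
  define y where "y = x - a *\<^sub>R w"
  have yu: "lor y u = 0" using xu wu by (simp add: y_def)
  have "lor y y = 1 - 2 * a * a + a * a" using xx ww by (simp add: y_def xw wx algebra_simps)
  hence yy: "lor y y = 0" using aa by simp
  obtain \<mu> where ym: "y = \<mu> *\<^sub>R u" using null_perp_parallel[OF uu u0 yu yy] by blast
  have "x = a *\<^sub>R w + \<mu> *\<^sub>R u" using ym by (simp add: y_def algebra_simps)
  also have "\<dots> = a *\<^sub>R (w + (a * \<mu>) *\<^sub>R u)" using aa by (simp add: algebra_simps)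
  finally have "v = (s * a) *\<^sub>R (w + (a * \<mu>) *\<^sub>R u)" using vx by simp
  moreover have "s * a \<noteq> 0" using s0 aa by auto
  ultimately show ?thesis by blast
qed



theorem mainTheorem7:
  fixes k :: nat and v :: "nat \<Rightarrow> ('a::euclidean_space \<times> real)"
  assumes "k \<ge> 3"
    and spacelike: "\<And>i. i < k \<Longrightarrow> lor (v i) (v i) > 0"
    and distinct: "\<And>i j. i < k \<Longrightarrow> j < k \<Longrightarrow> i \<noteq> j \<Longrightarrow> hplane (v i) \<noteq> hplane (v j)"
    and disjoint: "\<And>i j. i < k \<Longrightarrow> j < k \<Longrightarrow> i \<noteq> j \<Longrightarrow> hplane (v i) \<inter> hplane (v j) = {}"
    and ideal: "\<exists>\<xi>. geodesic_ray \<xi> \<and> (\<forall>i<k. has_ideal_point (hplane (v i)) \<xi>)"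
    and discrete: "discrete_isos (refl_group k v)"
  shows "(BijGroup hyp)\<lparr>carrier := refl_group k v\<rparr> \<cong> DInf"
proof -
  obtain \<xi> where ray: "geodesic_ray \<xi>" and hi: "\<forall>i<k. has_ideal_point (hplane (v i)) \<xi>"
    using ideal by blast
  obtain u where uu: "lor u u = 0" and u0: "u \<noteq> 0" and uv: "\<forall>i<k. lor u (v i) = 0"
    using ideal_null[OF ray hi] by blast
  have k0: "0 < k" "1 < k" using assms(1) by auto
  define s0 where "s0 = sqrt (lor (v 0) (v 0))"
  have s0p: "s0 > 0" using spacelike[OF k0(1)] s0_def by simp
  have ss: "s0 * s0 = lor (v 0) (v 0)" using spacelike[OF k0(1)] s0_def by simp
  define w where "w = (1/s0) *\<^sub>R v 0"
  have ww: "lor w w = 1" using s0p ss spacelike[OF k0(1)] by (simp add: w_def)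
  have wu: "lor w u = 0" using uv k0 by (simp add: w_def lor_sym[of "v 0" u])
  have v0w: "v 0 = s0 *\<^sub>R w" using s0p by (simp add: w_def)
  interpret fr: frame2 w u by unfold_locales (simp_all add: ww uu wu u0)
  have hw: "hplane w = hplane (v 0)" using v0w hplane_scale[of s0 w] s0p by simp
  have nf: "\<forall>i. \<exists>c. i < k \<longrightarrow> (\<exists>l. l \<noteq> 0 \<and> v i = l *\<^sub>R (w + c *\<^sub>R u))"
  proof
    fix i
    show "\<exists>c. i < k \<longrightarrow> (\<exists>l. l \<noteq> 0 \<and> v i = l *\<^sub>R (w + c *\<^sub>R u))"
    proof (cases "i < k")
      case False thus ?thesis by blast
    next
      case i: True
      show ?thesis
      proof (cases "i = 0")
        case True thus ?thesis using v0w s0p by (intro exI[of _ 0] impI exI[of _ s0]) simp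
      next
        case False
        have "hplane (v i) \<inter> hplane w = {}" using disjoint[OF i k0(1) False] hw by simp
        moreover have "lor (v i) u = 0" using uv i lor_sym by metis
        ultimately show ?thesis using normal_form[OF uu u0 ww wu spacelike[OF i]] i by blast
      qed
    qed
  qed
  from choice[OF nf] obtain cc where cc: "\<And>i. i < k \<Longrightarrow> \<exists>l. l \<noteq> 0 \<and> v i = l *\<^sub>R (w + cc i *\<^sub>R u)"
    by blast
  have hr: "hrefl (v i) = fr.R (cc i)" if i: "i < k" for i
  proof -
    obtain l where "l \<noteq> 0" "v i = l *\<^sub>R (w + cc i *\<^sub>R u)" using cc[OF i] by blast
    thus ?thesis by (simp add: hrefl_scale fr.R_def)
  qed
  have hp: "hplane (v i) = hplane (w + cc i *\<^sub>R u)" if i: "i < k" for i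
  proof -
    obtain l where "l \<noteq> 0" "v i = l *\<^sub>R (w + cc i *\<^sub>R u)" using cc[OF i] by blast
    thus ?thesis by (simp add: hplane_scale)
  qed
  have ccd: "cc i \<noteq> cc j" if "i < k" "j < k" "i \<noteq> j" for i j
    using distinct[OF that] hp[OF that(1)] hp[OF that(2)] by auto
  define D where "D = refl_group k v"
  have Dgen: "D = generate (BijGroup hyp) {fr.R (cc i) | i. i < k}"
    unfolding D_def refl_group_def using hr by (metis (mono_tags, lifting))
  have Rin: "fr.R (cc i) \<in> D" if "i < k" for i
    unfolding Dgen using that by (auto intro: generate.incl)
  have Dmul: "a \<otimes>\<^bsub>BijGroup hyp\<^esub> b \<in> D" if "a \<in> D" "b \<in> D" for a b
    using that unfolding Dgen by (rule generate.eng)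
  have Done: "fr.T 0 \<in> D" unfolding Dgen fr.one_G[symmetric] by (rule generate.one)
  have Dsub: "D \<subseteq> range fr.T \<union> range fr.R"
    unfolding Dgen by (rule fr.generate_sub) auto
  define L where "L = {m. fr.T m \<in> D}"
  define c0 where "c0 = cc 0"
  have Rc0: "fr.R c0 \<in> D" using Rin[OF k0(1)] c0_def by simp
  have RD: "fr.R c \<in> D \<longleftrightarrow> 2*(c - c0) \<in> L" for c
  proof
    assume "fr.R c \<in> D"
    hence "fr.R c \<otimes>\<^bsub>BijGroup hyp\<^esub> fr.R c0 \<in> D" using Rc0 Dmul by blast
    thus "2*(c - c0) \<in> L" by (simp add: fr.RR_G L_def)
  next
    assume "2*(c - c0) \<in> L"
    hence "fr.T (2*(c - c0)) \<otimes>\<^bsub>BijGroup hyp\<^esub> fr.R c0 \<in> D" using Rc0 Dmul by (simp add: L_def)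
    hence "fr.R (c0 + 2*(c - c0)/2) \<in> D" by (simp only: fr.TR_G)
    moreover have "c0 + 2*(c - c0)/2 = c" by (simp add: field_simps)
    ultimately show "fr.R c \<in> D" by simp
  qed
  have L0: "0 \<in> L" using Done by (simp add: L_def)
  have Ladd: "a + b \<in> L" if "a \<in> L" "b \<in> L" for a b
    using Dmul[of "fr.T a" "fr.T b"] that by (simp add: L_def fr.TT_G)
  have Lneg: "- a \<in> L" if "a \<in> L" for a
  proof -
    have "fr.T a \<otimes>\<^bsub>BijGroup hyp\<^esub> fr.R c0 \<in> D" using that Rc0 Dmul by (simp add: L_def)
    hence "fr.R (c0 + a/2) \<in> D" by (simp add: fr.TR_G)
    hence "fr.R c0 \<otimes>\<^bsub>BijGroup hyp\<^esub> fr.R (c0 + a/2) \<in> D" using Rc0 Dmul by blast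
    thus ?thesis by (simp add: fr.RR_G L_def)
  qed
  have xL: "2*(cc 1 - c0) \<in> L" using Rin[OF k0(2)] RD by blast
  have xn: "2*(cc 1 - c0) \<noteq> 0" using ccd[OF k0(2) k0(1)] c0_def by simp
  have dd: "discrete_isos D" using discrete D_def by simp
  have ex_K: "\<exists>K e. compact K \<and> K \<subseteq> hyp \<and> e > 0 \<and> (\<forall>h\<in>D. h \<noteq> fr.T 0 \<longrightarrow> (\<exists>x\<in>K. hdist (h x) (fr.T 0 x) \<ge> e))"
    using dd Done unfolding discrete_isos_def by (rule bspec)
  obtain K e where K: "compact K" "K \<subseteq> hyp" "e > 0"
    and Ke: "\<forall>h\<in>D. h \<noteq> fr.T 0 \<longrightarrow> (\<exists>x\<in>K. hdist (h x) (fr.T 0 x) \<ge> e)"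
    using ex_K by blast
  obtain B where B: "\<forall>x\<in>K. norm x \<le> B" using compact_imp_bounded[OF K(1)] unfolding bounded_iff by blast
  define M where "M = (2 * B * norm u)^2 + 1"
  define \<eta> where "\<eta> = 2 * (cosh e - 1)"
  have M0: "M > 0" using M_def by (simp add: add_nonneg_pos)
  have "cosh 0 < cosh e" using K(3) by (subst cosh_real_nonneg_less_iff) auto
  hence \<eta>0: "\<eta> > 0" using \<eta>_def by simp
  define \<delta> where "\<delta> = sqrt (\<eta> / M)"
  have \<delta>0: "\<delta> > 0" using \<eta>0 M0 \<delta>_def by simp
  have sep: "\<delta> \<le> \<bar>a\<bar>" if a: "a \<in> L" "a \<noteq> 0" for a
  proof -
    have "fr.T a \<in> D" using a L_def by simp
    moreover have "fr.T a \<noteq> fr.T 0" using fr.T_inj a(2) by blast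
    ultimately obtain x where x: "x \<in> K" "hdist (fr.T a x) (fr.T 0 x) \<ge> e" using Ke by blast
    have xh: "x \<in> hyp" using x K(2) by blast
    define P where "P = lor x u"
    define y where "y = 1 + a^2/2 * P^2"
    have "- lor (fr.T a x) x = y" using fr.T_lor[OF xh] by (simp add: y_def P_def)
    hence "arcosh y \<ge> e" using x fr.T0[OF xh] by (simp add: hdist_def)
    moreover have y1: "y \<ge> 1" by (simp add: y_def)
    ultimately have "cosh e \<le> cosh (arcosh y)" using K(3) by (subst cosh_real_nonneg_le_iff) auto
    hence "cosh e \<le> y" using y1 by simp
    hence ap: "a^2 * P^2 \<ge> \<eta>" by (simp add: y_def \<eta>_def)
    have "\<bar>P\<bar> \<le> 2 * norm x * norm u" using lor_bound P_def by simp
    also have "\<dots> \<le> 2 * B * norm u" using B x(1) by (simp add: mult_right_mono)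
    finally have "P^2 \<le> (2 * B * norm u)^2"
      by (metis abs_ge_zero order_trans power2_abs power_mono)
    hence "P^2 \<le> M" using M_def by simp
    hence "a^2 * P^2 \<le> a^2 * M" by (simp add: mult_left_mono)
    hence "\<eta> \<le> a^2 * M" using ap by simp
    hence "\<eta> / M \<le> a^2" using M0 by (simp add: divide_le_eq)
    hence "sqrt (\<eta> / M) \<le> sqrt (a^2)" by (rule real_sqrt_le_mono)
    thus ?thesis by (simp add: \<delta>_def)
  qed
  obtain d where d0: "d > 0" and Ld: "L = range (\<lambda>n::int. of_int n * d)"
    using disc_cyclic[OF L0 Ladd Lneg xL xn \<delta>0 sep] by blast
  define \<phi> where "\<phi> = (\<lambda>(e::int, n::int). if e = 1 then fr.T (of_int n * d) else fr.R (c0 + of_int n * d / 2))"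
  have mult_eq: "mult ((BijGroup hyp)\<lparr>carrier := D\<rparr>) = mult (BijGroup hyp)" by simp
  have TL: "fr.T (of_int n * d) \<in> D" for n using Ld L_def by auto
  have RL: "fr.R (c0 + of_int n * d / 2) \<in> D" for n using RD[of "c0 + of_int n * d / 2"] Ld by auto
  have hom: "\<phi> \<in> hom DInf ((BijGroup hyp)\<lparr>carrier := D\<rparr>)"
  proof (rule homI)
    fix x assume "x \<in> carrier DInf"
    thus "\<phi> x \<in> carrier ((BijGroup hyp)\<lparr>carrier := D\<rparr>)" using TL RL by (auto simp: \<phi>_def split: prod.splits)
  next
    fix x y assume x: "x \<in> carrier DInf" and y: "y \<in> carrier DInf"
    obtain e1 n1 where x1: "x = (e1, n1)" "e1 = 1 \<or> e1 = -1" using x by (cases x) (auto simp: DInf_def)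
    obtain e2 n2 where y1: "y = (e2, n2)" "e2 = 1 \<or> e2 = -1" using y by (cases y) (auto simp: DInf_def)
    have m': "(e1, n1) \<otimes>\<^bsub>DInf\<^esub> (e2, n2) = (e1 * e2, n1 + e1 * n2)" by (simp add: DInf_def)
    have key: "\<phi> (e1 * e2, n1 + e1 * n2) = \<phi> (e1, n1) \<otimes>\<^bsub>BijGroup hyp\<^esub> \<phi> (e2, n2)"
    proof -
      from x1(2) y1(2) consider "e1 = 1" "e2 = 1" | "e1 = 1" "e2 = -1" | "e1 = -1" "e2 = 1" | "e1 = -1" "e2 = -1"
        by blast
      thus "\<phi> (e1 * e2, n1 + e1 * n2) = \<phi> (e1, n1) \<otimes>\<^bsub>BijGroup hyp\<^esub> \<phi> (e2, n2)"
      proof cases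
        case 1
        have "\<phi> (e1, n1) \<otimes>\<^bsub>BijGroup hyp\<^esub> \<phi> (e2, n2) = fr.T (of_int n1 * d + of_int n2 * d)"
          using 1 by (simp add: \<phi>_def fr.TT_G)
        moreover have "\<phi> (e1 * e2, n1 + e1 * n2) = fr.T (of_int n1 * d + of_int n2 * d)"
          using 1 by (simp add: \<phi>_def distrib_right)
        ultimately show ?thesis by simp
      next
        case 2
        have "\<phi> (e1, n1) \<otimes>\<^bsub>BijGroup hyp\<^esub> \<phi> (e2, n2) = fr.R (c0 + of_int n2 * d / 2 + of_int n1 * d / 2)"
          using 2 by (simp add: \<phi>_def fr.TR_G)
        moreover have "c0 + of_int n2 * d / 2 + of_int n1 * d / 2 = c0 + of_int (n1 + n2) * d / 2"
          by (simp add: field_simps)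
        moreover have "\<phi> (e1 * e2, n1 + e1 * n2) = fr.R (c0 + of_int (n1 + n2) * d / 2)"
          using 2 by (simp add: \<phi>_def)
        ultimately show ?thesis by simp
      next
        case 3
        have "\<phi> (e1, n1) \<otimes>\<^bsub>BijGroup hyp\<^esub> \<phi> (e2, n2) = fr.R (c0 + of_int n1 * d / 2 - of_int n2 * d / 2)"
          using 3 by (simp add: \<phi>_def fr.RT_G)
        moreover have "c0 + of_int n1 * d / 2 - of_int n2 * d / 2 = c0 + of_int (n1 - n2) * d / 2"
          by (simp add: field_simps)
        moreover have "\<phi> (e1 * e2, n1 + e1 * n2) = fr.R (c0 + of_int (n1 - n2) * d / 2)"
          using 3 by (simp add: \<phi>_def)
        ultimately show ?thesis by simp
      next
        case 4
        have "\<phi> (e1, n1) \<otimes>\<^bsub>BijGroup hyp\<^esub> \<phi> (e2, n2) = fr.T (2 * (c0 + of_int n1 * d / 2 - (c0 + of_int n2 * d / 2)))"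
          using 4 by (simp add: \<phi>_def fr.RR_G)
        moreover have "2 * (c0 + of_int n1 * d / 2 - (c0 + of_int n2 * d / 2)) = of_int (n1 - n2) * d"
          by (simp add: field_simps)
        moreover have "\<phi> (e1 * e2, n1 + e1 * n2) = fr.T (of_int (n1 - n2) * d)"
          using 4 by (simp add: \<phi>_def)
        ultimately show ?thesis by simp
      qed
    qed
    show "\<phi> (x \<otimes>\<^bsub>DInf\<^esub> y) = \<phi> x \<otimes>\<^bsub>(BijGroup hyp)\<lparr>carrier := D\<rparr>\<^esub> \<phi> y"
      using key unfolding x1(1) y1(1) m' mult_eq .
  qed
  have inj: "inj_on \<phi> (carrier DInf)"
  proof (rule inj_onI)
    fix x y assume x: "x \<in> carrier DInf" and y: "y \<in> carrier DInf" and eq: "\<phi> x = \<phi> y"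
    obtain e1 n1 where x1: "x = (e1, n1)" "e1 = 1 \<or> e1 = -1" using x by (cases x) (auto simp: DInf_def)
    obtain e2 n2 where y1: "y = (e2, n2)" "e2 = 1 \<or> e2 = -1" using y by (cases y) (auto simp: DInf_def)
    from x1(2) y1(2) consider "e1 = 1" "e2 = 1" | "e1 = 1" "e2 = -1" | "e1 = -1" "e2 = 1" | "e1 = -1" "e2 = -1"
      by blast
    thus "x = y"
    proof cases
      case 1
      hence "fr.T (of_int n1 * d) = fr.T (of_int n2 * d)" using eq by (simp add: \<phi>_def x1(1) y1(1))
      hence "of_int n1 * d = of_int n2 * d" by (rule fr.T_inj)
      thus ?thesis using d0 1 x1(1) y1(1) by simp
    next
      case 2
      hence "fr.T (of_int n1 * d) = fr.R (c0 + of_int n2 * d / 2)" using eq by (simp add: \<phi>_def x1(1) y1(1))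
      thus ?thesis using fr.T_ne_R by blast
    next
      case 3
      hence "fr.T (of_int n2 * d) = fr.R (c0 + of_int n1 * d / 2)" using eq by (simp add: \<phi>_def x1(1) y1(1))
      thus ?thesis using fr.T_ne_R by blast
    next
      case 4
      hence "fr.R (c0 + of_int n1 * d / 2) = fr.R (c0 + of_int n2 * d / 2)" using eq by (simp add: \<phi>_def x1(1) y1(1))
      hence "c0 + of_int n1 * d / 2 = c0 + of_int n2 * d / 2" by (rule fr.R_inj)
      thus ?thesis using d0 4 x1(1) y1(1) by simp
    qed
  qed
  have surj: "\<phi> ` carrier DInf = D"
  proof
    show "\<phi> ` carrier DInf \<subseteq> D" using TL RL by (auto simp: \<phi>_def DInf_def)
  next
    show "D \<subseteq> \<phi> ` carrier DInf"
    proof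
      fix g assume g: "g \<in> D"
      then consider m where "g = fr.T m" | c where "g = fr.R c" using Dsub by blast
      thus "g \<in> \<phi> ` carrier DInf"
      proof cases
        case (1 m)
        hence "m \<in> L" using g L_def by simp
        then obtain n where "m = of_int n * d" using Ld by auto
        hence "g = \<phi> (1, n)" using 1 by (simp add: \<phi>_def)
        thus ?thesis by (auto simp: DInf_def)
      next
        case (2 c)
        hence "2*(c - c0) \<in> L" using g RD by simp
        then obtain n where "2*(c - c0) = of_int n * d" using Ld by auto
        hence "c = c0 + of_int n * d / 2" by simp
        hence "g = \<phi> (-1, n)" using 2 by (simp add: \<phi>_def)
        thus ?thesis by (auto simp: DInf_def)
      qed
    qed
  qed
  have "\<phi> \<in> iso DInf ((BijGroup hyp)\<lparr>carrier := D\<rparr>)"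
    using hom inj surj by (auto simp: iso_def bij_betw_def)
  hence "inv_into (carrier DInf) \<phi> \<in> iso ((BijGroup hyp)\<lparr>carrier := D\<rparr>) DInf"
    by (rule group.iso_set_sym[OF group_DInf])
  thus ?thesis unfolding D_def is_iso_def by blast
qed

end
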